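(* For every graph $H$ with $\delta(H)\ge1$, either $str(H)=|V(H)|+\delta(H)$, or $H$ is a proper subgraph of a graph $G$ with $\delta(G)=\delta(H)$ and $str(G)=|V(G)|+\delta(G)$.
   Context: For a graph $G$ of order $p$, a numbering is a bijection $f:V(G)\to[1,p]$; $str_f(G)=\max\{f(u)+f(v): uv\in E(G)\}$ and $str(G)=\min_f str_f(G)$. $\delta(G)$ denotes the minimum degree. *)

theory Defs
  imports Main
begin

definition graph :: "nat set \<Rightarrow> nat set set \<Rightarrow> bool" where
  "graph V E \<longleftrightarrow> finite V \<and> (\<forall>e\<in>E. \<exists>u v. e = {u, v} \<and> u \<in> V \<and> v \<in> V \<and> u \<noteq> v)"

definition degree :: "nat set \<Rightarrow> nat set set \<Rightarrow> nat \<Rightarrow> nat" where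
  "degree V E v = card {u \<in> V. {u, v} \<in> E}"

definition min_degree :: "nat set \<Rightarrow> nat set set \<Rightarrow> nat" where
  "min_degree V E = Min (degree V E ` V)"

definition numbering :: "nat set \<Rightarrow> (nat \<Rightarrow> nat) \<Rightarrow> bool" where
  "numbering V f \<longleftrightarrow> bij_betw f V {1..card V}"

definition str_num :: "nat set set \<Rightarrow> (nat \<Rightarrow> nat) \<Rightarrow> nat" where
  "str_num E f = Max {f u + f v | u v. {u, v} \<in> E}"

definition strength :: "nat set \<Rightarrow> nat set set \<Rightarrow> nat" where
  "strength V E = Min {str_num E f | f. numbering V f}"

definition proper_subgraph :: "nat set \<Rightarrow> nat set set \<Rightarrow> nat set \<Rightarrow> nat set set \<Rightarrow> bool" where
  "proper_subgraph VH EH VG EG \<longleftrightarrow> VH \<subseteq> VG \<and> EH \<subseteq> EG \<and> (VH, EH) \<noteq> (VG, EG)"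

end

theory Submission
  imports Defs
begin

lemma edge_in: "graph V E \<Longrightarrow> {a,b} \<in> E \<Longrightarrow> a \<in> V \<and> b \<in> V"
  unfolding graph_def by (metis doubleton_eq_iff)

lemma sums_bounded:
  assumes "graph V E" "numbering V f"
  shows "{f u + f v |u v. {u,v} \<in> E} \<subseteq> {..2 * card V}"
proof
  fix x assume "x \<in> {f u + f v |u v. {u,v} \<in> E}"
  then obtain u v where x: "x = f u + f v" "{u,v} \<in> E" by blast
  then have "u \<in> V" "v \<in> V" using edge_in assms(1) by blast+
  then have "f u \<le> card V" "f v \<le> card V" using assms(2)
    unfolding numbering_def bij_betw_def by auto
  then show "x \<in> {..2 * card V}" using x by auto
qed

lemma sums_finite:
  assumes "graph V E" "numbering V f"
  shows "finite {f u + f v |u v. {u,v} \<in> E}"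
  using sums_bounded[OF assms] finite_subset by blast

lemma str_upper:
  assumes "graph V E" "numbering V f" "E \<noteq> {}"
  shows "str_num E f \<le> 2 * card V"
proof -
  obtain e where e: "e \<in> E" using assms(3) by blast
  have "\<exists>a b. e = {a,b}" using assms(1) e unfolding graph_def by blast
  then obtain a b where "{a,b} \<in> E" using e by blast
  then have ne: "{f u + f v |u v. {u,v} \<in> E} \<noteq> {}" by blast
  have bd: "\<forall>x \<in> {f u + f v |u v. {u,v} \<in> E}. x \<le> 2 * card V"
    using sums_bounded[OF assms(1,2)] by (simp add: subset_iff)
  show ?thesis unfolding str_num_def
    using Max_le_iff[OF sums_finite[OF assms(1,2)] ne] bd by simp
qed

lemma str_lower:
  assumes "graph V E" "V \<noteq> {}" "numbering V f" "min_degree V E \<ge> 1"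
  shows "str_num E f \<ge> card V + min_degree V E"
proof -
  have fin: "finite V" using assms(1) graph_def by auto
  have bij: "bij_betw f V {1..card V}" using assms(3) numbering_def by auto
  have "card V \<ge> 1" using fin assms(2) by (simp add: Suc_leI card_gt_0_iff)
  then have "card V \<in> f ` V" using bij bij_betw_imp_surj_on by fastforce
  then obtain v where v: "v \<in> V" "f v = card V" by auto
  define N where "N = {u \<in> V. {u, v} \<in> E}"
  have "min_degree V E \<le> degree V E v" unfolding min_degree_def
    using fin v(1) by simp
  then have cN: "card N \<ge> min_degree V E" unfolding N_def degree_def by simp
  have "inj_on f N" using bij unfolding bij_betw_def N_def by (auto intro: inj_on_subset)
  then have cfN: "card (f ` N) \<ge> min_degree V E" using cN card_image by metis
  have "\<exists>u\<in>N. f u \<ge> min_degree V E"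
  proof (rule ccontr)
    assume "\<not> ?thesis"
    then have "f ` N \<subseteq> {..<min_degree V E}" by auto
    then have "card (f ` N) \<le> card {..<min_degree V E}" by (intro card_mono) auto
    moreover have "f ` N \<subseteq> {1..card V}" using bij unfolding bij_betw_def N_def by auto
    then have "0 \<notin> f ` N" by auto
    ultimately have "card (f ` N) \<le> card ({..<min_degree V E} - {0})"
      using \<open>f ` N \<subseteq> {..<min_degree V E}\<close> by (intro card_mono) auto
    then show False using cfN assms(4) by simp
  qed
  then obtain u where u: "u \<in> N" "f u \<ge> min_degree V E" by blast
  have "f u + f v \<in> {f u + f v |u v. {u,v} \<in> E}" using u(1) N_def by blast
  then have "f u + f v \<le> str_num E f" unfolding str_num_def
    using sums_finite[OF assms(1,3)] by simp
  then show ?thesis using u v by simp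
qed

lemma strength_eq:
  assumes "graph V E" "V \<noteq> {}" "E \<noteq> {}" "numbering V f0" "min_degree V E \<ge> 1"
    "str_num E f0 \<le> card V + min_degree V E"
  shows "strength V E = card V + min_degree V E"
proof -
  let ?A = "{str_num E f | f. numbering V f}"
  have "?A \<subseteq> {..2 * card V}" using str_upper[OF assms(1) _ assms(3)] by auto
  then have fA: "finite ?A" using finite_subset by blast
  have "str_num E f0 = card V + min_degree V E"
    using str_lower[OF assms(1,2,4,5)] assms(6) by simp
  then show ?thesis unfolding strength_def
    using assms(4) str_lower[OF assms(1,2) _ assms(5)]
    by (intro Min_eqI[OF fA]) (auto, metis)
qed


theorem mainTheorem10:
  fixes VH :: "nat set" and EH :: "nat set set"
  assumes "graph VH EH" and "VH \<noteq> {}" and "min_degree VH EH \<ge> 1"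
  shows "strength VH EH = card VH + min_degree VH EH
         \<or> (\<exists>VG EG. graph VG EG \<and> VG \<noteq> {} \<and> proper_subgraph VH EH VG EG
              \<and> min_degree VG EG = min_degree VH EH
              \<and> strength VG EG = card VG + min_degree VG EG)"
proof -
  define n where "n = card VH"
  define k where "k = min_degree VH EH"
  define M where "M = Max VH"
  have fin: "finite VH" using assms(1) graph_def by auto
  have n1: "n \<ge> 1" using fin assms(2) n_def by (simp add: Suc_leI card_gt_0_iff)
  have k1: "k \<ge> 1" using assms(3) k_def by simp
  obtain h where h: "bij_betw h VH {0..<n}" using ex_bij_betw_finite_nat[OF fin] n_def by blast
  define g where "g = (\<lambda>x. Suc (h x))"
  have injg: "inj_on g VH" using h unfolding g_def bij_betw_def inj_on_def by auto
  have "g ` VH = Suc ` (h ` VH)" unfolding g_def by (simp add: image_image)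
  also have "\<dots> = Suc ` {0..<n}" using h unfolding bij_betw_def by simp
  also have "\<dots> = {1..n}" by (auto simp: image_Suc_atLeastLessThan)
  finally have imgg: "g ` VH = {1..n}" .
  have gb: "bij_betw g VH {1..n}" using injg imgg bij_betw_def by blast
  define W where "W = {M+1..M+n}"
  define VG where "VG = VH \<union> W"
  define S where "S = {v \<in> VH. g v \<le> k}"
  define EG where "EG = EH \<union> {{w,s} | w s. w \<in> W \<and> s \<in> S}"
  define f where "f = (\<lambda>x. if x \<in> VH then g x else x - M + n)"
  have leM: "\<And>x. x \<in> VH \<Longrightarrow> x \<le> M" using fin M_def by simp
  have disj: "VH \<inter> W = {}" using leM W_def by fastforce
  have W1: "M + 1 \<in> W" using n1 W_def by simp
  have deg_ge: "\<And>v. v \<in> VH \<Longrightarrow> degree VH EH v \<ge> k"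
    unfolding k_def min_degree_def using fin by simp
  obtain v0 where v0: "v0 \<in> VH" using assms(2) by blast
  have "degree VH EH v0 \<le> n" unfolding degree_def n_def using fin by (intro card_mono) auto
  then have kn: "k \<le> n" using deg_ge[OF v0] by simp
  have SV: "S \<subseteq> VH" using S_def by auto
  have "g ` S = {1..k}"
  proof
    show "g ` S \<subseteq> {1..k}" using S_def imgg by auto
    show "{1..k} \<subseteq> g ` S"
    proof
      fix y assume y: "y \<in> {1..k}"
      then have "y \<in> g ` VH" using imgg kn by auto
      then obtain x where "x \<in> VH" "y = g x" by auto
      then show "y \<in> g ` S" using y S_def by auto
    qed
  qed
  then have cS: "card S = k" using card_image[OF inj_on_subset[OF injg SV]] by simp
  have fVH: "bij_betw f VH {1..n}" using gb by (rule bij_betw_cong[THEN iffD1, rotated]) (simp add: f_def)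
  have fW: "bij_betw f W {n+1..2*n}"
    unfolding bij_betw_def
  proof
    show "inj_on f W" unfolding inj_on_def f_def W_def using disj W_def by auto
    show "f ` W = {n+1..2*n}"
    proof
      show "f ` W \<subseteq> {n+1..2*n}" unfolding f_def using disj W_def by auto
      show "{n+1..2*n} \<subseteq> f ` W"
      proof
        fix y assume y: "y \<in> {n+1..2*n}"
        have "y - n + M \<in> W" using y W_def by auto
        moreover have "f (y - n + M) = y" using calculation disj y unfolding f_def by auto
        ultimately show "y \<in> f ` W" by (metis image_eqI)
      qed
    qed
  qed
  have "bij_betw f VG ({1..n} \<union> {n+1..2*n})" unfolding VG_def
    by (rule bij_betw_combine[OF fVH fW]) auto
  moreover have "{1..n} \<union> {n+1..2*n} = {1..2*n}" by auto
  ultimately have fb: "bij_betw f VG {1..2*n}" by simp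
  have cVG: "card VG = 2*n" using bij_betw_same_card[OF fb] by simp
  have numb: "numbering VG f" using fb cVG numbering_def by simp
  have finVG: "finite VG" using fin VG_def W_def by simp
  have gr: "graph VG EG" unfolding graph_def
  proof (intro conjI ballI finVG)
    fix e assume "e \<in> EG"
    then show "\<exists>u v. e = {u, v} \<and> u \<in> VG \<and> v \<in> VG \<and> u \<noteq> v"
    proof (cases "e \<in> EH")
      case True then show ?thesis using assms(1) unfolding graph_def VG_def by blast
    next
      case False
      then obtain w s where "e = {w,s}" "w \<in> W" "s \<in> S" using \<open>e \<in> EG\<close> EG_def by blast
      then show ?thesis using SV disj VG_def by blast
    qed
  qed
  have degW: "\<And>w. w \<in> W \<Longrightarrow> {u \<in> VG. {u, w} \<in> EG} = S"
  proof -
    fix w assume w: "w \<in> W"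
    have wn: "w \<notin> VH" using w disj by blast
    show "{u \<in> VG. {u, w} \<in> EG} = S"
    proof
      show "S \<subseteq> {u \<in> VG. {u, w} \<in> EG}"
      proof
        fix u assume "u \<in> S"
        then have "{w,u} \<in> EG" using w EG_def by blast
        then show "u \<in> {u \<in> VG. {u, w} \<in> EG}" using \<open>u \<in> S\<close> SV VG_def by (auto simp: insert_commute)
      qed
      show "{u \<in> VG. {u, w} \<in> EG} \<subseteq> S"
      proof
        fix u assume u: "u \<in> {u \<in> VG. {u, w} \<in> EG}"
        then have e: "{u,w} \<in> EG" by simp
        show "u \<in> S"
        proof (cases "{u,w} \<in> EH")
          case True then show ?thesis using edge_in[OF assms(1) True] wn by blast
        next
          case False
          then obtain w' s where ws: "{u,w} = {w',s}" "w' \<in> W" "s \<in> S" using e EG_def by blast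
          then have "(u = w' \<and> w = s) \<or> (u = s \<and> w = w')" by (metis doubleton_eq_iff)
          then show ?thesis using ws SV wn by blast
        qed
      qed
    qed
  qed
  have degVH: "\<And>v. v \<in> VH \<Longrightarrow> degree VG EG v \<ge> k"
  proof -
    fix v assume v: "v \<in> VH"
    have "degree VH EH v \<le> degree VG EG v" unfolding degree_def
      using finVG by (intro card_mono) (auto simp: VG_def EG_def)
    then show "degree VG EG v \<ge> k" using deg_ge[OF v] by simp
  qed
  have mdG: "min_degree VG EG = k" unfolding min_degree_def
  proof (rule Min_eqI)
    show "finite (degree VG EG ` VG)" using finVG by simp
    show "\<And>y. y \<in> degree VG EG ` VG \<Longrightarrow> k \<le> y"
    proof -
      fix y assume "y \<in> degree VG EG ` VG"
      then obtain x where x: "x \<in> VG" "y = degree VG EG x" by blast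
      show "k \<le> y"
      proof (cases "x \<in> VH")
        case True then show ?thesis using degVH x by simp
      next
        case False then have "x \<in> W" using x VG_def by simp
        then have "degree VG EG x = k" unfolding degree_def using degW cS by simp
        then show ?thesis using x by simp
      qed
    qed
    have d1: "degree VG EG (M+1) = k" unfolding degree_def using degW[OF W1] cS by simp
    have "M+1 \<in> VG" using W1 unfolding VG_def by simp
    then show "k \<in> degree VG EG ` VG" using d1 by (metis image_eqI)
  qed
  have VGne: "VG \<noteq> {}" using VG_def assms(2) by simp
  have "S \<noteq> {}" using cS k1 by auto
  then obtain s0 where s0: "s0 \<in> S" by blast
  have e0: "{M+1, s0} \<in> EG" unfolding EG_def using W1 s0 by blast
  then have EGne: "EG \<noteq> {}" by blast
  have strf: "str_num EG f \<le> card VG + min_degree VG EG"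
  proof -
    have ne: "{f u + f v |u v. {u,v} \<in> EG} \<noteq> {}" using e0 by blast
    have fle: "\<And>x. x \<in> VG \<Longrightarrow> f x \<le> 2*n" using fb unfolding bij_betw_def by auto
    have fS: "\<And>x. x \<in> S \<Longrightarrow> f x \<le> k" using SV S_def f_def by auto
    have fH: "\<And>x. x \<in> VH \<Longrightarrow> f x \<le> n" using fVH unfolding bij_betw_def by auto
    have "\<forall>x \<in> {f u + f v |u v. {u,v} \<in> EG}. x \<le> 2*n + k"
    proof
      fix x assume "x \<in> {f u + f v |u v. {u,v} \<in> EG}"
      then obtain u v where x: "x = f u + f v" "{u,v} \<in> EG" by blast
      show "x \<le> 2*n + k"
      proof (cases "{u,v} \<in> EH")
        case True
        then have "u \<in> VH" "v \<in> VH" using edge_in[OF assms(1) True] by auto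
        then have "f u \<le> n" "f v \<le> n" using fH by auto
        then show ?thesis using x by simp
      next
        case False
        then obtain w s where ws: "{u,v} = {w,s}" "w \<in> W" "s \<in> S" using x EG_def by blast
        then have "(u = w \<and> v = s) \<or> (u = s \<and> v = w)" by (metis doubleton_eq_iff)
        moreover have "f w \<le> 2*n" "f s \<le> k" using fle ws VG_def fS by auto
        ultimately show ?thesis using x by auto
      qed
    qed
    then have "str_num EG f \<le> 2*n + k" unfolding str_num_def
      using Max_le_iff[OF sums_finite[OF gr numb] ne] by blast
    then show ?thesis using cVG mdG by simp
  qed
  have "strength VG EG = card VG + min_degree VG EG"
    using strength_eq[OF gr VGne EGne numb _ strf] mdG k1 by simp
  moreover have "proper_subgraph VH EH VG EG"
  proof -
    have "M+1 \<notin> VH" using W1 disj by blast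
    then have "VH \<noteq> VG" using W1 unfolding VG_def by blast
    then show ?thesis unfolding proper_subgraph_def VG_def EG_def by blast
  qed
  ultimately have "graph VG EG \<and> VG \<noteq> {} \<and> proper_subgraph VH EH VG EG
              \<and> min_degree VG EG = min_degree VH EH
              \<and> strength VG EG = card VG + min_degree VG EG"
    using gr VGne mdG unfolding k_def by simp
  then show ?thesis by (rule disjI2[OF exI[of _ VG, OF exI[of _ EG]]])
qed

end
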